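(* Let $f:\mathbb{R}^n\to\mathbb{R}\cup\{\infty\}$ be a proper lower semicontinuous function with $\bar x\in\operatorname{dom} f$ and $0\in\partial f(\bar x)$, and suppose $f$ is subdifferentially continuous, prox-regular, and twice epi-differentiable at $\bar x$ for $0$. Then $\bar x$ is a strong local minimizer of $f$ if and only if the sufficient condition of the second kind holds at $\bar x$, i.e., there exists $\kappa>0$ such that for each $w\in\operatorname{dom}D(\partial_p f)(\bar x|0)$ with $\|w\|=1$ there exists $z\in D(\partial_p f)(\bar x|0)(w)$ with $\langle z,w\rangle\ge\kappa$.
   Context: Limiting subdifferential $\partial f$, proximal subdifferential $\partial_p f(\bar x)=\{v\mid \liminf_{x\to\bar x}\frac{f(x)-f(\bar x)-\langle v,x-\bar x\rangle}{\|x-\bar x\|^2}>-\infty\}$. $D(\partial_p f)(\bar x|0)(w)=\{z\mid (w,z)\in T_{\operatorname{gph}\partial_p f}(\bar x,0)\}$ with $T$ the contingent cone $T_\Omega(\bar u)=\{v\mid \exists t_k\downarrow0,\ v_k\to v,\ \bar u+t_kv_k\in\Omega\}$. Prox-regularity at $\bar x$ for $\bar v$: there are $r,\varepsilon>0$ with $f(x)\ge f(u)+\langle v,x-u\rangle-\frac r2\|x-u\|^2$ for $x,u\in\mathbb{B}_\varepsilon(\bar x)$, $|f(u)-f(\bar x)|<\varepsilon$, $v\in\partial f(u)\cap\mathbb{B}_\varepsilon(\bar v)$. Subdifferential continuity: $(x_k,v_k)\to(\bar x,\bar v)$, $v_k\in\partial f(x_k)$ imply $f(x_k)\to f(\bar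 x)$. Twice epi-differentiability at $\bar x$ for $v$: for every $w$ and $\tau_k\downarrow0$ there are $w^k\to w$ with $\frac{f(\bar x+\tau_kw^k)-f(\bar x)-\tau_k\langle v,w^k\rangle}{\tau_k^2/2}\to d^2f(\bar x|v)(w)$, where $d^2f(\bar x|v)(w)=\liminf_{\tau\downarrow0,w'\to w}\frac{f(\bar x+\tau w')-f(\bar x)-\tau\langle v,w'\rangle}{\tau^2/2}$. Strong local minimizer: $f(x)-f(\bar x)\ge\frac\kappa2\|x-\bar x\|^2$ near $\bar x$ for some $\kappa>0$. *)

theory Defs
  imports "HOL-Analysis.Analysis" "HOL-Library.Extended_Real"
begin

definition proper_fun :: "('a \<Rightarrow> ereal) \<Rightarrow> bool" where
  "proper_fun f \<longleftrightarrow> (\<forall>x. f x \<noteq> -\<infinity>) \<and> (\<exists>x. f x \<noteq> \<infinity>)"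

definition lsc_fun :: "('a::topological_space \<Rightarrow> ereal) \<Rightarrow> bool" where
  "lsc_fun f \<longleftrightarrow> (\<forall>x. f x \<le> Liminf (at x) f)"

definition edom :: "('a \<Rightarrow> ereal) \<Rightarrow> 'a set" where
  "edom f = {x. f x < \<infinity>}"

definition frechet_subdiff :: "('a::real_inner \<Rightarrow> ereal) \<Rightarrow> 'a \<Rightarrow> 'a set" where
  "frechet_subdiff f xb = {v. \<bar>f xb\<bar> \<noteq> \<infinity> \<and>
     Liminf (at xb) (\<lambda>x. (f x - f xb - ereal (inner v (x - xb))) / ereal (norm (x - xb))) \<ge> 0}"

definition limiting_subdiff :: "('a::real_inner \<Rightarrow> ereal) \<Rightarrow> 'a \<Rightarrow> 'a set" where
  "limiting_subdiff f xb = {v. \<bar>f xb\<bar> \<noteq> \<infinity> \<and>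
     (\<exists>xs vs. xs \<longlonglongrightarrow> xb \<and> (\<lambda>k. f (xs k)) \<longlonglongrightarrow> f xb \<and> vs \<longlonglongrightarrow> v \<and>
        (\<forall>k. vs k \<in> frechet_subdiff f (xs k)))}"

definition prox_subdiff :: "('a::real_inner \<Rightarrow> ereal) \<Rightarrow> 'a \<Rightarrow> 'a set" where
  "prox_subdiff f xb = {v. \<bar>f xb\<bar> \<noteq> \<infinity> \<and>
     Liminf (at xb) (\<lambda>x. (f x - f xb - ereal (inner v (x - xb))) / ereal ((norm (x - xb))\<^sup>2)) > -\<infinity>}"

definition graph_of :: "('a \<Rightarrow> 'b set) \<Rightarrow> ('a \<times> 'b) set" where
  "graph_of F = {(x, y). y \<in> F x}"

definition contingent_cone :: "'a::real_normed_vector set \<Rightarrow> 'a \<Rightarrow> 'a set" where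
  "contingent_cone \<Omega> u = {v. \<exists>t vs. (\<forall>k. t k > 0) \<and> t \<longlonglongrightarrow> 0 \<and> vs \<longlonglongrightarrow> v \<and>
       (\<forall>k. u + t k *\<^sub>R vs k \<in> \<Omega>)}"

definition graphical_deriv :: "('a::real_normed_vector \<Rightarrow> 'b::real_normed_vector set) \<Rightarrow> 'a \<Rightarrow> 'b \<Rightarrow> 'a \<Rightarrow> 'b set" where
  "graphical_deriv F x y w = {z. (w, z) \<in> contingent_cone (graph_of F) (x, y)}"

definition sdom :: "('a \<Rightarrow> 'b set) \<Rightarrow> 'a set" where
  "sdom F = {w. F w \<noteq> {}}"

definition prox_regular_at :: "('a::real_inner \<Rightarrow> ereal) \<Rightarrow> 'a \<Rightarrow> 'a \<Rightarrow> bool" where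
  "prox_regular_at f xb vb \<longleftrightarrow> (\<exists>r>0. \<exists>\<epsilon>>0. \<forall>x u v.
     x \<in> cball xb \<epsilon> \<longrightarrow> u \<in> cball xb \<epsilon> \<longrightarrow> \<bar>f u - f xb\<bar> < ereal \<epsilon> \<longrightarrow>
     v \<in> limiting_subdiff f u \<longrightarrow> v \<in> cball vb \<epsilon> \<longrightarrow>
     f x \<ge> f u + ereal (inner v (x - u)) - ereal (r / 2 * (norm (x - u))\<^sup>2))"

definition subdiff_continuous_at :: "('a::real_inner \<Rightarrow> ereal) \<Rightarrow> 'a \<Rightarrow> 'a \<Rightarrow> bool" where
  "subdiff_continuous_at f xb vb \<longleftrightarrow> (\<forall>xs vs. xs \<longlonglongrightarrow> xb \<longrightarrow> vs \<longlonglongrightarrow> vb \<longrightarrow>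
     (\<forall>k. vs k \<in> limiting_subdiff f (xs k)) \<longrightarrow> (\<lambda>k. f (xs k)) \<longlonglongrightarrow> f xb)"

definition second_dq :: "('a::real_inner \<Rightarrow> ereal) \<Rightarrow> 'a \<Rightarrow> 'a \<Rightarrow> real \<Rightarrow> 'a \<Rightarrow> ereal" where
  "second_dq f xb v \<tau> w = (f (xb + \<tau> *\<^sub>R w) - f xb - ereal (\<tau> * inner v w)) / ereal (\<tau>\<^sup>2 / 2)"

definition second_subderiv :: "('a::real_inner \<Rightarrow> ereal) \<Rightarrow> 'a \<Rightarrow> 'a \<Rightarrow> 'a \<Rightarrow> ereal" where
  "second_subderiv f xb v w = Liminf (at_right 0 \<times>\<^sub>F nhds w) (\<lambda>(\<tau>, w'). second_dq f xb v \<tau> w')"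

definition twice_epi_diff_at :: "('a::real_inner \<Rightarrow> ereal) \<Rightarrow> 'a \<Rightarrow> 'a \<Rightarrow> bool" where
  "twice_epi_diff_at f xb v \<longleftrightarrow> (\<forall>w \<tau>. (\<forall>k. \<tau> k > 0) \<longrightarrow> \<tau> \<longlonglongrightarrow> 0 \<longrightarrow>
     (\<exists>ws. ws \<longlonglongrightarrow> w \<and> (\<lambda>k. second_dq f xb v (\<tau> k) (ws k)) \<longlonglongrightarrow> second_subderiv f xb v w))"

definition strong_local_min :: "('a::real_normed_vector \<Rightarrow> ereal) \<Rightarrow> 'a \<Rightarrow> bool" where
  "strong_local_min f xb \<longleftrightarrow> (\<exists>\<kappa>>0. \<exists>\<delta>>0. \<forall>x\<in>ball xb \<delta>.
     f x - f xb \<ge> ereal (\<kappa> / 2 * (norm (x - xb))\<^sup>2))"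

end

theory Submission
  imports Defs
begin


lemma dq_fin:
  assumes "f xb = ereal F0" "\<tau> > 0" "f (xb + \<tau> *\<^sub>R w) = ereal X"
  shows "second_dq f xb 0 \<tau> w = ereal ((X - F0) / (\<tau>\<^sup>2 / 2))"
  using assms by (simp add: second_dq_def)

lemma dq_inf:
  assumes "f xb = ereal F0" "\<tau> > 0" "f (xb + \<tau> *\<^sub>R w) = \<infinity>"
  shows "second_dq f xb 0 \<tau> w = \<infinity>"
  using assms by (simp add: second_dq_def)

lemma liminf_seq:
  assumes "\<And>k. \<tau> k > 0" "\<tau> \<longlonglongrightarrow> 0" "ws \<longlonglongrightarrow> w" "y < second_subderiv f xb v w"
  shows "eventually (\<lambda>k. y < second_dq f xb v (\<tau> k) (ws k)) sequentially"
proof -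
  have fl: "filterlim (\<lambda>k. (\<tau> k, ws k)) (at_right 0 \<times>\<^sub>F nhds w) sequentially"
    by (intro filterlim_Pair tendsto_imp_filterlim_at_right assms(2,3)) (use assms(1) in auto)
  have "eventually (\<lambda>p. y < (\<lambda>(\<tau>, w'). second_dq f xb v \<tau> w') p) (at_right 0 \<times>\<^sub>F nhds w)"
    using le_Liminf_iff[THEN iffD1, OF order.refl] assms(4) unfolding second_subderiv_def by blast
  from filterlim_iff[THEN iffD1, OF fl, rule_format, OF this] show ?thesis by simp
qed

lemma lsc_nhds:
  assumes "lsc_fun f" "c < f x"
  shows "eventually (\<lambda>y. c < f y) (nhds x)"
proof -
  have "eventually (\<lambda>y. c < f y) (at x)"
    using assms le_Liminf_iff unfolding lsc_fun_def by (metis order.strict_trans2)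
  then show ?thesis using assms(2) unfolding eventually_at_filter
    by (auto elim: eventually_mono)
qed

lemma real_aux1:
  fixes a n d z :: real
  assumes "a < n / d\<^sup>2" "0 < d" "d < - z / (\<bar>a\<bar> + 1)" "z < 0"
  shows "z \<le> n / d"
proof -
  have d2: "d\<^sup>2 > 0" using assms by simp
  have "n > a * d\<^sup>2" using assms(1) d2 by (simp add: field_simps)
  hence "n / d > a * d" using assms(2) by (simp add: field_simps power2_eq_square)
  moreover have "a * d \<ge> - \<bar>a\<bar> * d" using assms(2) by (simp add: abs_if)
  moreover have "\<bar>a\<bar> * d \<le> \<bar>a\<bar> * (- z / (\<bar>a\<bar> + 1))"
    using assms(3) by (intro mult_left_mono) auto
  moreover have "\<bar>a\<bar> * (- z / (\<bar>a\<bar> + 1)) \<le> - z"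
    using assms(4) by (simp add: field_simps)
  ultimately show ?thesis by linarith
qed

lemma prox_frechet:
  fixes f :: "'a::euclidean_space \<Rightarrow> ereal"
  assumes "v \<in> prox_subdiff f u"
  shows "v \<in> frechet_subdiff f u"
proof -
  define N where "N x = f x - f u - ereal (inner v (x - u))" for x
  have fu: "\<bar>f u\<bar> \<noteq> \<infinity>" and L: "Liminf (at u) (\<lambda>x. N x / ereal ((norm (x - u))\<^sup>2)) > -\<infinity>"
    using assms unfolding prox_subdiff_def N_def by auto
  obtain a where a: "ereal a < Liminf (at u) (\<lambda>x. N x / ereal ((norm (x - u))\<^sup>2))"
    using ereal_dense2[OF L] by auto
  have ev1: "eventually (\<lambda>x. ereal a < N x / ereal ((norm (x - u))\<^sup>2)) (at u)"
    using le_Liminf_iff[THEN iffD1, OF order.refl] a by blast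
  have "0 \<le> Liminf (at u) (\<lambda>x. N x / ereal (norm (x - u)))"
  proof (subst le_Liminf_iff, intro allI impI)
    fix y :: ereal assume "y < 0"
    then obtain z where z: "y < ereal z" "ereal z < 0" using ereal_dense2 by blast
    define \<eta> where "\<eta> = - z / (\<bar>a\<bar> + 1)"
    have "\<eta> > 0" using z by (simp add: \<eta>_def divide_neg_pos abs_ge_zero add_nonneg_pos)
    hence ev2: "eventually (\<lambda>x. x \<noteq> u \<and> dist x u < \<eta>) (at u)"
      unfolding eventually_at by (auto intro!: exI[of _ \<eta>])
    show "eventually (\<lambda>x. y < N x / ereal (norm (x - u))) (at u)"
      using eventually_conj[OF ev1 ev2]
    proof (rule eventually_mono)
      fix x assume H: "ereal a < N x / ereal ((norm (x - u))\<^sup>2) \<and> x \<noteq> u \<and> dist x u < \<eta>"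
      have d: "norm (x - u) > 0" "norm (x - u) < \<eta>" using H by (auto simp: dist_norm)
      show "y < N x / ereal (norm (x - u))"
      proof (cases "N x")
        case (real n)
        have "a < n / (norm (x - u))\<^sup>2" using H real by (auto split: if_splits)
        hence "z \<le> n / norm (x - u)" using real_aux1[of a n "norm (x - u)" z] d z by (simp add: \<eta>_def)
        thus ?thesis using real d z by (simp add: order_less_le_trans)
      next
        case PInf thus ?thesis using d z by auto
      next
        case MInf thus ?thesis using H d by simp
      qed
    qed
  qed
  thus ?thesis using fu unfolding frechet_subdiff_def N_def by auto
qed

lemma prox_limiting:
  fixes f :: "'a::euclidean_space \<Rightarrow> ereal"
  assumes "v \<in> prox_subdiff f u"
  shows "v \<in> limiting_subdiff f u"
proof -
  have "\<bar>f u\<bar> \<noteq> \<infinity>" using assms unfolding prox_subdiff_def by auto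
  moreover have "v \<in> frechet_subdiff f u" using prox_frechet[OF assms] .
  ultimately show ?thesis unfolding limiting_subdiff_def
    by (intro CollectI conjI exI[of _ "\<lambda>k. u"] exI[of _ "\<lambda>k. v"]) auto
qed

lemma lim_G:
  fixes a c :: "nat \<Rightarrow> real"
  assumes "\<And>y. y < \<phi> \<Longrightarrow> eventually (\<lambda>k. y < ereal (a k)) sequentially"
    and "eventually (\<lambda>k. a k \<le> c k) sequentially" and "c \<longlonglongrightarrow> C"
  shows "\<phi> \<le> ereal C"
proof (rule ccontr)
  assume "\<not> \<phi> \<le> ereal C"
  hence "ereal C < \<phi>" by simp
  then obtain y where y: "C < y" "ereal y < \<phi>" using ereal_dense2 by force
  have e1: "eventually (\<lambda>k. y < a k) sequentially" using assms(1)[OF y(2)] by simp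
  have e2: "eventually (\<lambda>k. c k < y) sequentially" using order_tendstoD(2)[OF assms(3) y(1)] .
  have "eventually (\<lambda>k. False) sequentially"
    using eventually_conj[OF e1 eventually_conj[OF e2 assms(2)]] by (rule eventually_mono) auto
  thus False by simp
qed

lemma real_aux2:
  fixes P p r n :: real
  assumes H: "\<And>\<sigma>. \<sigma> > 0 \<Longrightarrow> P \<le> \<sigma>\<^sup>2 * P - 2 * (\<sigma> - 1) * p + r * (\<sigma> - 1)\<^sup>2 * n"
  shows "p = P"
proof (rule ccontr)
  assume ne: "p \<noteq> P"
  define M where "M = \<bar>P\<bar> + \<bar>r * n\<bar> + 1"
  have M: "M > 0" "\<bar>P + r * n\<bar> < M" unfolding M_def by (auto simp: abs_triangle_ineq order_le_less_trans)
  show False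
  proof (cases "p > P")
    case True
    define s where "s = min 1 ((p - P) / M)"
    have s: "s > 0" "s \<le> (p - P) / M" using True M unfolding s_def by auto
    have "P \<le> (1 + s)\<^sup>2 * P - 2 * s * p + r * s\<^sup>2 * n" using H[of "1 + s"] s by simp
    hence "0 \<le> s * ((s + 2) * P - 2 * p + r * s * n)" by (simp add: algebra_simps power2_eq_square)
    hence h: "0 \<le> (s + 2) * P - 2 * p + r * s * n" using s by (simp add: zero_le_mult_iff)
    have "s * (P + r * n) \<le> s * M" using M s by (intro mult_left_mono) auto
    also have "s * M \<le> p - P" using s M by (simp add: field_simps)
    finally show False using h True by (simp add: algebra_simps)
  next
    case False
    hence lt: "p < P" using ne by simp
    define s where "s = min (1/2) ((P - p) / M)"
    have s12: "s \<le> 1/2" unfolding s_def by (rule min.cobounded1)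
    have s: "s > 0" "s \<le> (P - p) / M" "s \<le> 1/2" using lt M s12 unfolding s_def by auto
    have "P \<le> (1 - s)\<^sup>2 * P - 2 * (- s) * p + r * s\<^sup>2 * n" using H[of "1 - s"] s by simp
    hence "0 \<le> s * (- (2 - s) * P + 2 * p + r * s * n)" by (simp add: algebra_simps power2_eq_square)
    hence h: "0 \<le> - (2 - s) * P + 2 * p + r * s * n" using s by (simp add: zero_le_mult_iff)
    have "s * (P + r * n) \<le> s * M" using M s by (intro mult_left_mono) auto
    also have "s * M \<le> P - p" using s M by (simp add: field_simps)
    finally show False using h lt by (simp add: algebra_simps)
  qed
qed

lemma dq_lower:
  assumes "f xb = ereal F0" "\<tau> > 0" "f (xb + \<tau> *\<^sub>R w) \<ge> ereal (F0 + c * \<tau>\<^sup>2 / 2)"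
  shows "second_dq f xb 0 \<tau> w \<ge> ereal c"
proof (cases "f (xb + \<tau> *\<^sub>R w)")
  case (real X)
  hence "X \<ge> F0 + c * \<tau>\<^sup>2 / 2" using assms by simp
  hence "c \<le> (X - F0) / (\<tau>\<^sup>2 / 2)" using assms(2) by (simp add: field_simps)
  thus ?thesis using dq_fin[OF assms(1,2) real] by simp
next
  case PInf thus ?thesis using dq_inf[OF assms(1,2) PInf] by simp
next
  case MInf thus ?thesis using assms by simp
qed

lemma dq_upper:
  assumes "f xb = ereal F0" "\<tau> > 0" "f (xb + \<tau> *\<^sub>R w) \<le> ereal (F0 + c * \<tau>\<^sup>2 / 2)"
    "f (xb + \<tau> *\<^sub>R w) \<noteq> - \<infinity>"
  shows "second_dq f xb 0 \<tau> w \<le> ereal c"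
proof (cases "f (xb + \<tau> *\<^sub>R w)")
  case (real X)
  hence "X \<le> F0 + c * \<tau>\<^sup>2 / 2" using assms by simp
  hence "(X - F0) / (\<tau>\<^sup>2 / 2) \<le> c" using assms(2) by (simp add: field_simps)
  thus ?thesis using dq_fin[OF assms(1,2) real] by simp
next
  case PInf thus ?thesis using assms by simp
next
  case MInf thus ?thesis using assms by simp
qed

lemma PRr:
  assumes PR: "\<forall>x u v. x \<in> cball xb \<epsilon> \<longrightarrow> u \<in> cball xb \<epsilon> \<longrightarrow> \<bar>f u - f xb\<bar> < ereal \<epsilon> \<longrightarrow>
     v \<in> limiting_subdiff f u \<longrightarrow> v \<in> cball 0 \<epsilon> \<longrightarrow>
     f x \<ge> f u + ereal (inner v (x - u)) - ereal (r / 2 * (norm (x - u))\<^sup>2)"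
    and "f xb = ereal F0" "f u = ereal A" "u \<in> cball xb \<epsilon>" "\<bar>A - F0\<bar> < \<epsilon>"
    "v \<in> limiting_subdiff f u" "v \<in> cball 0 \<epsilon>" "x \<in> cball xb \<epsilon>"
  shows "f x \<ge> ereal (A + inner v (x - u) - r / 2 * (norm (x - u))\<^sup>2)"
  using PR[rule_format, of x u v] assms(2-) by simp

lemma real_aux3:
  fixes A F0 T q r m :: real
  assumes "A - F0 \<le> T * (q + r / 2 * m)" "T > 0"
  shows "(A - F0) / (T / 2) \<le> 2 * q + r * m"
  using assms by (simp add: field_simps)

lemma real_aux4:
  fixes A F0 X T q r m \<sigma> B :: real
  assumes "X \<ge> A + T * q - r / 2 * (T * m)" "T > 0" "\<sigma> > 0"
    "B = (X - F0) / (\<sigma>\<^sup>2 * T / 2)"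
  shows "(A - F0) / (T / 2) \<le> \<sigma>\<^sup>2 * B - 2 * q + r * m"
proof -
  have "\<sigma>\<^sup>2 * B = (X - F0) / (T / 2)" using assms by (simp add: field_simps)
  moreover have "(A - F0) / (T / 2) \<le> ((X - F0) - T * q + r / 2 * (T * m)) / (T / 2)"
    using assms by (intro divide_right_mono) auto
  moreover have "((X - F0) - T * q + r / 2 * (T * m)) / (T / 2) = (X - F0) / (T / 2) - 2 * q + r * m"
    using assms by (simp add: field_simps)
  ultimately show ?thesis by simp
qed

lemma key:
  fixes f :: "'a::euclidean_space \<Rightarrow> ereal"
  assumes F0: "f xb = ereal F0"
    and r: "r > 0" and eps: "\<epsilon> > 0"
    and PR: "\<forall>x u v. x \<in> cball xb \<epsilon> \<longrightarrow> u \<in> cball xb \<epsilon> \<longrightarrow> \<bar>f u - f xb\<bar> < ereal \<epsilon> \<longrightarrow>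
     v \<in> limiting_subdiff f u \<longrightarrow> v \<in> cball 0 \<epsilon> \<longrightarrow>
     f x \<ge> f u + ereal (inner v (x - u)) - ereal (r / 2 * (norm (x - u))\<^sup>2)"
    and L0: "0 \<in> limiting_subdiff f xb"
    and SC: "subdiff_continuous_at f xb 0"
    and TE: "twice_epi_diff_at f xb 0"
    and wz: "(w, z) \<in> contingent_cone (graph_of (prox_subdiff f)) (xb, 0)"
  shows "second_subderiv f xb 0 w = ereal (inner z w)"
proof -
  define \<phi> where "\<phi> = second_subderiv f xb 0 w"
  have PR0: "f x \<ge> ereal (F0 - r / 2 * (norm (x - xb))\<^sup>2)" if "x \<in> cball xb \<epsilon>" for x
    using PRr[OF PR F0 F0, of 0 x] L0 eps that by simp
  obtain t vs where t: "\<And>k. t k > 0" "t \<longlonglongrightarrow> 0" "vs \<longlonglongrightarrow> (w, z)"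
    "\<And>k. (xb, 0) + t k *\<^sub>R vs k \<in> graph_of (prox_subdiff f)"
    using wz unfolding contingent_cone_def by blast
  define ww where "ww k = fst (vs k)" for k
  define zz where "zz k = snd (vs k)" for k
  have wwc: "ww \<longlonglongrightarrow> w" unfolding ww_def using tendsto_fst[OF t(3)] by simp
  have zzc: "zz \<longlonglongrightarrow> z" unfolding zz_def using tendsto_snd[OF t(3)] by simp
  define u where "u k = xb + t k *\<^sub>R ww k" for k
  define v where "v k = t k *\<^sub>R zz k" for k
  have mem: "v k \<in> prox_subdiff f (u k)" for k
  proof -
    have "(xb, 0) + t k *\<^sub>R vs k = (u k, v k)"
      unfolding u_def v_def ww_def zz_def by (cases "vs k") simp
    thus ?thesis using t(4)[of k] unfolding graph_of_def by simp
  qed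
  define A where "A k = real_of_ereal (f (u k))" for k
  have fuA: "f (u k) = ereal (A k)" for k
    using mem[of k] unfolding prox_subdiff_def A_def by (cases "f (u k)") auto
  have lim: "v k \<in> limiting_subdiff f (u k)" for k using prox_limiting[OF mem] .
  have uc: "u \<longlonglongrightarrow> xb" unfolding u_def
    using tendsto_add[OF tendsto_const tendsto_scaleR[OF t(2) wwc], of xb] by simp
  have vc: "v \<longlonglongrightarrow> 0" unfolding v_def
    using tendsto_scaleR[OF t(2) zzc] by simp
  have "(\<lambda>k. f (u k)) \<longlonglongrightarrow> f xb" using SC uc vc lim unfolding subdiff_continuous_at_def by blast
  hence Ac: "A \<longlonglongrightarrow> F0" using fuA F0 by simp
  have ev_u: "eventually (\<lambda>k. u k \<in> cball xb \<epsilon>) sequentially"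
    using tendstoD[OF uc eps] by (rule eventually_mono) (simp add: dist_commute)
  have ev_v: "eventually (\<lambda>k. v k \<in> cball 0 \<epsilon>) sequentially"
    using tendstoD[OF vc eps] by (rule eventually_mono) (simp add: dist_commute)
  have ev_A: "eventually (\<lambda>k. \<bar>A k - F0\<bar> < \<epsilon>) sequentially"
    using tendstoD[OF Ac eps] by (rule eventually_mono) (simp add: dist_real_def)
  have PRk: "eventually (\<lambda>k. \<forall>x\<in>cball xb \<epsilon>.
      f x \<ge> ereal (A k + inner (v k) (x - u k) - r / 2 * (norm (x - u k))\<^sup>2)) sequentially"
    using eventually_conj[OF ev_u eventually_conj[OF ev_v ev_A]]
    by (rule eventually_mono) (use PRr[OF PR F0 fuA] lim in blast)
  define a where "a k = (A k - F0) / ((t k)\<^sup>2 / 2)" for k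
  have dqa: "second_dq f xb 0 (t k) (ww k) = ereal (a k)" for k
    using dq_fin[where f=f and xb=xb, OF F0 t(1)[of k] fuA[unfolded u_def]] unfolding a_def by simp
  have LB: "eventually (\<lambda>k. y < ereal (a k)) sequentially" if "y < \<phi>" for y
    using liminf_seq[OF t(1,2) wwc that[unfolded \<phi>_def]] dqa by simp
  have "eventually (\<lambda>k. a k \<le> 2 * inner (zz k) (ww k) + r * (norm (ww k))\<^sup>2) sequentially"
    using PRk
  proof (rule eventually_mono)
    fix k assume H: "\<forall>x\<in>cball xb \<epsilon>. f x \<ge> ereal (A k + inner (v k) (x - u k) - r / 2 * (norm (x - u k))\<^sup>2)"
    have "xb - u k = - (t k *\<^sub>R ww k)" unfolding u_def by simp
    hence "F0 \<ge> A k + inner (v k) (xb - u k) - r / 2 * (norm (xb - u k))\<^sup>2"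
      using H[rule_format, of xb] eps F0 by simp
    also have "inner (v k) (xb - u k) = - ((t k)\<^sup>2 * inner (zz k) (ww k))"
      unfolding v_def \<open>xb - u k = _\<close> by (simp add: power2_eq_square)
    also have "(norm (xb - u k))\<^sup>2 = (t k)\<^sup>2 * (norm (ww k))\<^sup>2"
      unfolding \<open>xb - u k = _\<close> using t(1)[of k] by (simp add: power_mult_distrib)
    finally have "A k - F0 \<le> (t k)\<^sup>2 * (inner (zz k) (ww k) + r / 2 * (norm (ww k))\<^sup>2)"
      by (simp add: algebra_simps)
    thus "a k \<le> 2 * inner (zz k) (ww k) + r * (norm (ww k))\<^sup>2"
      unfolding a_def using real_aux3 t(1)[of k] by simp
  qed
  hence ub: "\<phi> \<le> ereal (2 * inner z w + r * (norm w)\<^sup>2)"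
    by (intro lim_G[OF LB]) (auto intro!: tendsto_intros wwc zzc)
  obtain ws0 where ws0: "ws0 \<longlonglongrightarrow> w" "(\<lambda>k. second_dq f xb 0 (t k) (ws0 k)) \<longlonglongrightarrow> \<phi>"
    using TE t(1,2) unfolding twice_epi_diff_at_def \<phi>_def by blast
  have tc0: "(\<lambda>k. t k *\<^sub>R ws0 k) \<longlonglongrightarrow> 0" using tendsto_scaleR[OF t(2) ws0(1)] by simp
  have ev0: "eventually (\<lambda>k. xb + t k *\<^sub>R ws0 k \<in> cball xb \<epsilon>) sequentially"
    using tendstoD[OF tc0 eps] by (rule eventually_mono) (auto simp: dist_norm)
  have "eventually (\<lambda>k. ereal (- r * (norm (ws0 k))\<^sup>2) \<le> second_dq f xb 0 (t k) (ws0 k)) sequentially"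
    using ev0
  proof (rule eventually_mono)
    fix k assume "xb + t k *\<^sub>R ws0 k \<in> cball xb \<epsilon>"
    from PR0[OF this] t(1)[of k]
    have "ereal (F0 + (- r * (norm (ws0 k))\<^sup>2) * (t k)\<^sup>2 / 2) \<le> f (xb + t k *\<^sub>R ws0 k)"
      by (simp add: power_mult_distrib algebra_simps abs_of_pos)
    then show "ereal (- r * (norm (ws0 k))\<^sup>2) \<le> second_dq f xb 0 (t k) (ws0 k)"
      by (rule dq_lower[where f=f and xb=xb, OF F0 t(1)[of k]])
  qed
  hence lb: "ereal (- r * (norm w)\<^sup>2) \<le> \<phi>"
    by (intro tendsto_le[OF trivial_limit_sequentially ws0(2)]) (auto intro!: tendsto_intros ws0(1))
  define P where "P = real_of_ereal \<phi>"
  have \<phi>P: "\<phi> = ereal P" using ub lb unfolding P_def by (cases \<phi>) auto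
  have main: "P \<le> \<sigma>\<^sup>2 * P - 2 * (\<sigma> - 1) * inner z w + r * (\<sigma> - 1)\<^sup>2 * (norm w)\<^sup>2" if \<sigma>: "\<sigma> > 0" for \<sigma>
  proof -
    have tp: "\<And>k. \<sigma> * t k > 0" using t(1) \<sigma> by simp
    have tc: "(\<lambda>k. \<sigma> * t k) \<longlonglongrightarrow> 0" using tendsto_mult[OF tendsto_const t(2), of \<sigma>] by simp
    obtain ws where ws: "ws \<longlonglongrightarrow> w" "(\<lambda>k. second_dq f xb 0 (\<sigma> * t k) (ws k)) \<longlonglongrightarrow> ereal P"
    proof -
      have "\<exists>ws. ws \<longlonglongrightarrow> w \<and> (\<lambda>k. second_dq f xb 0 (\<sigma> * t k) (ws k)) \<longlonglongrightarrow> second_subderiv f xb 0 w"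
        using TE unfolding twice_epi_diff_at_def
        by (elim allE[of _ w] allE[of _ "\<lambda>k. \<sigma> * t k"]) (use tp tc in blast)
      thus ?thesis using that \<phi>P unfolding \<phi>_def by auto
    qed
    define x where "x k = xb + (\<sigma> * t k) *\<^sub>R ws k" for k
    define b where "b k = second_dq f xb 0 (\<sigma> * t k) (ws k)" for k
    define B where "B k = real_of_ereal (b k)" for k
    have tc1: "(\<lambda>k. (\<sigma> * t k) *\<^sub>R ws k) \<longlonglongrightarrow> 0" using tendsto_scaleR[OF tc ws(1)] by simp
    have evx: "eventually (\<lambda>k. x k \<in> cball xb \<epsilon>) sequentially"
      unfolding x_def using tendstoD[OF tc1 eps] by (rule eventually_mono) (auto simp: dist_norm)
    have evb: "eventually (\<lambda>k. b k < ereal (P + 1)) sequentially"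
      using order_tendstoD(2)[OF ws(2)] unfolding b_def by simp
    have Bc: "B \<longlonglongrightarrow> P" unfolding B_def b_def using lim_real_of_ereal[OF ws(2)] .
    define c where "c k = \<sigma>\<^sup>2 * B k - 2 * inner (zz k) (\<sigma> *\<^sub>R ws k - ww k) + r * (norm (\<sigma> *\<^sub>R ws k - ww k))\<^sup>2" for k
    have cc: "c \<longlonglongrightarrow> \<sigma>\<^sup>2 * P - 2 * inner z (\<sigma> *\<^sub>R w - w) + r * (norm (\<sigma> *\<^sub>R w - w))\<^sup>2"
      unfolding c_def by (intro tendsto_intros Bc zzc ws(1) wwc)
    have "eventually (\<lambda>k. a k \<le> c k) sequentially"
      using eventually_conj[OF PRk eventually_conj[OF evx evb]]
    proof (rule eventually_mono)
      fix k assume H: "(\<forall>x\<in>cball xb \<epsilon>. f x \<ge> ereal (A k + inner (v k) (x - u k) - r / 2 * (norm (x - u k))\<^sup>2)) \<and>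
        x k \<in> cball xb \<epsilon> \<and> b k < ereal (P + 1)"
      have low: "f (x k) \<ge> ereal (A k + inner (v k) (x k - u k) - r / 2 * (norm (x k - u k))\<^sup>2)"
        using H by blast
      have "f (x k) \<noteq> \<infinity>"
      proof
        assume "f (x k) = \<infinity>"
        hence "b k = \<infinity>" unfolding b_def using dq_inf[where f=f and xb=xb, OF F0 tp[of k]] unfolding x_def by blast
        thus False using H by simp
      qed
      then obtain X where X: "f (x k) = ereal X" using low by (cases "f (x k)") auto
      have bX: "b k = ereal ((X - F0) / ((\<sigma> * t k)\<^sup>2 / 2))"
        unfolding b_def using dq_fin[where f=f and xb=xb, OF F0 tp[of k] X[unfolded x_def]] .
      have BX: "B k = (X - F0) / (\<sigma>\<^sup>2 * (t k)\<^sup>2 / 2)"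
        unfolding B_def bX by (simp add: power_mult_distrib)
      have xu: "x k - u k = t k *\<^sub>R (\<sigma> *\<^sub>R ws k - ww k)"
        unfolding x_def u_def by (simp add: algebra_simps)
      have "X \<ge> A k + (t k)\<^sup>2 * inner (zz k) (\<sigma> *\<^sub>R ws k - ww k)
               - r / 2 * ((t k)\<^sup>2 * (norm (\<sigma> *\<^sub>R ws k - ww k))\<^sup>2)"
        using low X t(1)[of k] unfolding xu v_def by (simp add: power2_eq_square mult_ac)
      from real_aux4[OF this _ \<sigma> BX] t(1)[of k]
      show "a k \<le> c k" unfolding a_def c_def by simp
    qed
    from lim_G[of \<phi> a c, OF LB this cc]
    have "P \<le> \<sigma>\<^sup>2 * P - 2 * inner z (\<sigma> *\<^sub>R w - w) + r * (norm (\<sigma> *\<^sub>R w - w))\<^sup>2"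
      using \<phi>P by simp
    moreover have "\<sigma> *\<^sub>R w - w = (\<sigma> - 1) *\<^sub>R w" by (simp add: algebra_simps)
    moreover have "inner z ((\<sigma> - 1) *\<^sub>R w) = (\<sigma> - 1) * inner z w" by simp
    moreover have "(norm ((\<sigma> - 1) *\<^sub>R w))\<^sup>2 = (\<sigma> - 1)\<^sup>2 * (norm w)\<^sup>2"
      by (simp add: power_mult_distrib)
    ultimately have "P \<le> \<sigma>\<^sup>2 * P - 2 * ((\<sigma> - 1) * inner z w) + r * ((\<sigma> - 1)\<^sup>2 * (norm w)\<^sup>2)"
      by simp
    thus ?thesis by (simp only: mult.assoc)
  qed
  have "inner z w = P" using real_aux2[OF main] by blast
  thus ?thesis using \<phi>P unfolding \<phi>_def by simp
qed



lemma lsc_min: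
  fixes g :: "'a::euclidean_space \<Rightarrow> ereal"
  assumes K: "compact K" and x1: "x1 \<in> K" "g x1 < \<infinity>"
    and L: "\<And>y. y \<in> K \<Longrightarrow> ereal L \<le> g y"
    and lsc: "\<And>x c. x \<in> K \<Longrightarrow> c < g x \<Longrightarrow> eventually (\<lambda>y. c < g y) (nhds x)"
  shows "\<exists>u\<in>K. \<forall>y\<in>K. g u \<le> g y"
proof -
  define m where "m = (INF y\<in>K. g y)"
  have mL: "ereal L \<le> m" unfolding m_def using L by (auto intro: INF_greatest)
  have mU: "m \<le> g x1" unfolding m_def using x1 by (auto intro: INF_lower)
  obtain M where M: "m = ereal M" using mL mU x1(2) by (cases m) auto
  have "\<forall>k. \<exists>y\<in>K. g y < ereal (M + 1 / (real k + 1))"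
  proof
    fix k :: nat
    have "m < ereal (M + 1 / (real k + 1))" using M by simp
    thus "\<exists>y\<in>K. g y < ereal (M + 1 / (real k + 1))" unfolding m_def INF_less_iff .
  qed
  then obtain y where y: "\<And>k. y k \<in> K" "\<And>k. g (y k) < ereal (M + 1 / (real k + 1))"
    by metis
  obtain l s where l: "l \<in> K" "strict_mono (s :: nat \<Rightarrow> nat)" "(y \<circ> s) \<longlonglongrightarrow> l"
    using seq_compactE[OF compact_imp_seq_compact[OF K]] y(1) by metis
  have "g l \<le> m"
  proof (rule ccontr)
    assume "\<not> g l \<le> m"
    hence "m < g l" by simp
    then obtain c where c: "m < ereal c" "ereal c < g l" using ereal_dense2 by blast
    have "eventually (\<lambda>z. ereal c < g z) (nhds l)" using lsc[OF l(1) c(2)] .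
    from filterlim_iff[THEN iffD1, OF l(3), rule_format, OF this]
    have ev: "eventually (\<lambda>k. ereal c < g (y (s k))) sequentially" by (simp add: o_def)
    have cM: "c - M > 0" using c M by simp
    obtain N :: nat where N: "N > 0" "inverse (real N) < c - M" using ex_inverse_of_nat_less[OF cM] by auto
    obtain N2 where N2: "\<And>k. k \<ge> N2 \<Longrightarrow> ereal c < g (y (s k))" using ev unfolding eventually_sequentially by auto
    define k where "k = max N N2"
    have "ereal c < ereal (M + 1 / (real (s k) + 1))"
      using N2[of k] y(2)[of "s k"] unfolding k_def by (meson max.cobounded2 order.strict_trans)
    hence "c < M + 1 / (real (s k) + 1)" by simp
    moreover have "s k \<ge> N" using seq_suble[OF l(2), of k] unfolding k_def by simp
    hence "1 / (real (s k) + 1) \<le> inverse (real N)" using N(1)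
      by (simp add: field_simps)
    ultimately show False using N(2) by simp
  qed
  moreover have "\<forall>z\<in>K. m \<le> g z" unfolding m_def by (auto intro: INF_lower)
  ultimately show ?thesis using l(1) by (meson order_trans)
qed

lemma lsc_plus:
  fixes f :: "'a::euclidean_space \<Rightarrow> ereal"
  assumes "lsc_fun f" "\<And>y. f y \<noteq> -\<infinity>" "continuous_on UNIV h" "c < f x + ereal (h x)"
  shows "eventually (\<lambda>y. c < f y + ereal (h y)) (nhds x)"
proof (cases c)
  case MInf
  have "-\<infinity> < f y + ereal (h y)" for y using assms(2)[of y] by (cases "f y") auto
  thus ?thesis using MInf by simp
next
  case PInf thus ?thesis using assms(4) by simp
next
  case (real C)
  have "ereal (C - h x) < f x" using assms(4) real by (cases "f x") auto
  then obtain D where D: "ereal (C - h x) < ereal D" "ereal D < f x" using ereal_dense2 by blast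
  define e where "e = D - (C - h x)"
  have e: "e > 0" using D(1) unfolding e_def by simp
  have e1: "eventually (\<lambda>y. ereal D < f y) (nhds x)" using lsc_nhds[OF assms(1) D(2)] .
  have "(h \<longlongrightarrow> h x) (at x)" using assms(3) by (simp add: continuous_on_def)
  hence "eventually (\<lambda>y. dist (h y) (h x) < e) (at x)" using e by (rule tendstoD)
  hence e2: "eventually (\<lambda>y. dist (h y) (h x) < e) (nhds x)" unfolding eventually_at_filter
    using e by (auto elim: eventually_mono)
  show ?thesis using eventually_conj[OF e1 e2]
  proof (rule eventually_mono)
    fix y assume H: "ereal D < f y \<and> dist (h y) (h x) < e"
    hence "D + h y > C" unfolding e_def dist_real_def by auto
    thus "c < f y + ereal (h y)" using H real by (cases "f y") auto
  qed
qed

lemma quad_id: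
  fixes y u x0 :: "'a::real_inner"
  shows "(norm (y - x0))\<^sup>2 = (norm (y - u))\<^sup>2 + 2 * inner (y - u) (u - x0) + (norm (u - x0))\<^sup>2"
proof -
  have gen: "inner (a + b) (a + b) = inner a a + 2 * inner a b + inner b b" for a b :: 'a
    by (simp add: inner_add_left inner_add_right inner_commute)
  have "y - x0 = (y - u) + (u - x0)" by simp
  hence "(norm (y - x0))\<^sup>2 = inner ((y - u) + (u - x0)) ((y - u) + (u - x0))"
    by (metis power2_norm_eq_inner)
  also have "\<dots> = (norm (y - u))\<^sup>2 + 2 * inner (y - u) (u - x0) + (norm (u - x0))\<^sup>2"
    unfolding gen by (simp add: power2_norm_eq_inner)
  finally show ?thesis .
qed

lemma real_aux5:
  fixes r d s t e :: real
  assumes "r > 0" "0 \<le> d" "0 \<le> s" "s \<le> d + t" "0 < t" "e \<le> 1"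
    "(4 * r + 4) / 2 * d\<^sup>2 \<le> e * t\<^sup>2 / 2 + r / 2 * s\<^sup>2"
  shows "(2 * r + 4) * d\<^sup>2 \<le> (1 + 2 * r) * t\<^sup>2"
proof -
  have "s\<^sup>2 \<le> (d + t)\<^sup>2" using assms by (intro power_mono) auto
  also have "(d + t)\<^sup>2 \<le> 2 * d\<^sup>2 + 2 * t\<^sup>2" using sum_squares_ge_zero[of "d - t" 0]
    by (simp add: power2_eq_square algebra_simps)
  finally have s2: "s\<^sup>2 \<le> 2 * d\<^sup>2 + 2 * t\<^sup>2" .
  have "r / 2 * s\<^sup>2 \<le> r / 2 * (2 * d\<^sup>2 + 2 * t\<^sup>2)" using s2 assms(1) by (intro mult_left_mono) auto
  moreover have "e * t\<^sup>2 \<le> t\<^sup>2" using assms(6) mult_right_mono[of e 1 "t\<^sup>2"] by simp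
  ultimately show ?thesis using assms(7) by (simp add: algebra_simps)
qed

lemma construct:
  fixes f :: "'a::euclidean_space \<Rightarrow> ereal"
  assumes F0: "f xb = ereal F0" and r: "r > 0" and lsc: "lsc_fun f" and prp: "\<And>y. f y \<noteq> -\<infinity>"
    and PR0: "\<And>x. x \<in> cball xb \<epsilon> \<Longrightarrow> f x \<ge> ereal (F0 - r / 2 * (norm (x - xb))\<^sup>2)"
    and t: "t = norm (x0 - xb)" "t > 0" "3 * t \<le> \<epsilon>"
    and e: "e \<le> 1" and fx0: "f x0 \<le> ereal (F0 + e * t\<^sup>2 / 2)"
  shows "\<exists>u. (2 * r + 4) * (norm (u - x0))\<^sup>2 \<le> (1 + 2 * r) * t\<^sup>2 \<and> f u \<le> ereal (F0 + e * t\<^sup>2 / 2)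
     \<and> - (4 * r + 4) *\<^sub>R (u - x0) \<in> prox_subdiff f u"
proof -
  define \<beta> where "\<beta> = 4 * r + 4"
  define g where "g y = f y + ereal (\<beta> / 2 * (norm (y - x0))\<^sup>2)" for y
  define K where "K = cball xb (3 * t)"
  have x0K: "x0 \<in> K" unfolding K_def using t by (simp add: dist_norm norm_minus_commute)
  have gx0: "g x0 = f x0" unfolding g_def by simp
  have "\<exists>u\<in>K. \<forall>y\<in>K. g u \<le> g y"
  proof (rule lsc_min[where L = "F0 - r / 2 * (3 * t)\<^sup>2"])
    show "compact K" unfolding K_def by simp
    show "x0 \<in> K" by (rule x0K)
    have "f x0 < \<infinity>" using fx0 by (rule order.strict_trans1) simp
    thus "g x0 < \<infinity>" using gx0 by simp
  next
    fix y assume y: "y \<in> K"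
    hence yb: "norm (y - xb) \<le> 3 * t" unfolding K_def by (simp add: dist_norm norm_minus_commute)
    hence "y \<in> cball xb \<epsilon>" using t by (simp add: dist_norm norm_minus_commute)
    hence fy: "f y \<ge> ereal (F0 - r / 2 * (norm (y - xb))\<^sup>2)" by (rule PR0)
    have "(norm (y - xb))\<^sup>2 \<le> (3 * t)\<^sup>2" using yb by (intro power_mono) auto
    hence "F0 - r / 2 * (3 * t)\<^sup>2 \<le> F0 - r / 2 * (norm (y - xb))\<^sup>2" using r by simp
    hence "ereal (F0 - r / 2 * (3 * t)\<^sup>2) \<le> ereal (F0 - r / 2 * (norm (y - xb))\<^sup>2)" by simp
    hence "ereal (F0 - r / 2 * (3 * t)\<^sup>2) \<le> f y" using fy by (rule order_trans)
    moreover have "f y \<le> g y" unfolding g_def using r \<beta>_def by (cases "f y") auto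
    ultimately show "ereal (F0 - r / 2 * (3 * t)\<^sup>2) \<le> g y" by simp
  next
    fix x c assume "c < g x"
    thus "eventually (\<lambda>y. c < g y) (nhds x)" unfolding g_def
      by (intro lsc_plus[OF lsc prp]) (intro continuous_intros)
  qed
  then obtain u where u: "u \<in> K" "\<And>y. y \<in> K \<Longrightarrow> g u \<le> g y" by blast
  define d where "d = norm (u - x0)"
  define s where "s = norm (u - xb)"
  have gu: "g u \<le> ereal (F0 + e * t\<^sup>2 / 2)" using u(2)[OF x0K] gx0 fx0 by simp
  have "f u \<noteq> \<infinity>" using gu unfolding g_def by auto
  then obtain U where U: "f u = ereal U" using prp[of u] by (cases "f u") auto
  have ineq1: "U + \<beta> / 2 * d\<^sup>2 \<le> F0 + e * t\<^sup>2 / 2" using gu U unfolding g_def d_def by simp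
  have sK: "s \<le> 3 * t" using u(1) unfolding K_def s_def by (simp add: dist_norm norm_minus_commute)
  hence "u \<in> cball xb \<epsilon>" using t unfolding s_def by (simp add: dist_norm norm_minus_commute)
  hence "ereal (F0 - r / 2 * s\<^sup>2) \<le> f u" unfolding s_def by (rule PR0)
  hence ineq2: "U \<ge> F0 - r / 2 * s\<^sup>2" using U by simp
  have sdt: "s \<le> d + t" unfolding s_def d_def t(1)
    using norm_triangle_ineq[of "u - x0" "x0 - xb"] by simp
  have "\<beta> / 2 * d\<^sup>2 \<le> e * t\<^sup>2 / 2 + r / 2 * s\<^sup>2" using ineq1 ineq2 by linarith
  hence "(4 * r + 4) / 2 * d\<^sup>2 \<le> e * t\<^sup>2 / 2 + r / 2 * s\<^sup>2" unfolding \<beta>_def .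
  have main: "(2 * r + 4) * d\<^sup>2 \<le> (1 + 2 * r) * t\<^sup>2"
    by (rule real_aux5[OF r _ _ sdt t(2) e]) (auto simp only: d_def s_def norm_ge_zero intro: \<open>(4 * r + 4) / 2 * d\<^sup>2 \<le> _\<close>[unfolded d_def s_def])
  have "\<beta> / 2 * d\<^sup>2 \<ge> 0" using r unfolding \<beta>_def by simp
  hence "U \<le> F0 + e * t\<^sup>2 / 2" using ineq1 by linarith
  hence fu: "f u \<le> ereal (F0 + e * t\<^sup>2 / 2)" using U by simp
  have "d\<^sup>2 < t\<^sup>2"
  proof -
    have "(1 + 2 * r) * t\<^sup>2 < (2 * r + 4) * t\<^sup>2" using t(2) by simp
    hence "(2 * r + 4) * d\<^sup>2 < (2 * r + 4) * t\<^sup>2" using main by linarith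
    thus ?thesis using r by simp
  qed
  hence "d < t" using t(2) by (simp add: power2_less_imp_less less_imp_le)
  hence s2: "s < 3 * t" using sdt t(2) by simp
  define v where "v = - \<beta> *\<^sub>R (u - x0)"
  have "Liminf (at u) (\<lambda>y. (f y - f u - ereal (inner v (y - u))) / ereal ((norm (y - u))\<^sup>2)) \<ge> ereal (- \<beta> / 2)"
  proof (rule Liminf_bounded)
    have "eventually (\<lambda>y. y \<noteq> u \<and> dist y u < 3 * t - s) (at u)"
      unfolding eventually_at using s2 by (auto intro!: exI[of _ "3 * t - s"])
    thus "eventually (\<lambda>y. ereal (- \<beta> / 2) \<le> (f y - f u - ereal (inner v (y - u))) / ereal ((norm (y - u))\<^sup>2)) (at u)"
    proof (rule eventually_mono)
      fix y assume y: "y \<noteq> u \<and> dist y u < 3 * t - s"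
      have n: "(norm (y - u))\<^sup>2 > 0" using y by simp
      have "dist xb y \<le> dist xb u + dist u y" by (rule dist_triangle)
      hence "y \<in> K" unfolding K_def using y s_def by (simp add: dist_commute dist_norm norm_minus_commute)
      hence gy: "g u \<le> g y" by (rule u(2))
      show "ereal (- \<beta> / 2) \<le> (f y - f u - ereal (inner v (y - u))) / ereal ((norm (y - u))\<^sup>2)"
      proof (cases "f y")
        case PInf thus ?thesis using n U by simp
      next
        case MInf thus ?thesis using prp by simp
      next
        case (real Y)
        have h1: "U + \<beta> / 2 * (norm (u - x0))\<^sup>2 \<le> Y + \<beta> / 2 * (norm (y - x0))\<^sup>2"
          using gy U real unfolding g_def by simp
        have h2: "inner v (y - u) = - \<beta> * inner (y - u) (u - x0)"
          unfolding v_def by (simp add: inner_commute)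
        have "Y - U - inner v (y - u) \<ge> - \<beta> / 2 * (norm (y - u))\<^sup>2"
          using h1 h2 quad_id[of y x0 u] by (simp add: algebra_simps)
        hence "- \<beta> / 2 \<le> (Y - U - inner v (y - u)) / (norm (y - u))\<^sup>2"
          using n by (simp add: field_simps)
        thus ?thesis using real U n by simp
      qed
    qed
  qed
  hence "-\<infinity> < Liminf (at u) (\<lambda>y. (f y - f u - ereal (inner v (y - u))) / ereal ((norm (y - u))\<^sup>2))"
    by (rule order.strict_trans2[rotated]) simp
  hence "v \<in> prox_subdiff f u" unfolding prox_subdiff_def using U by simp
  thus ?thesis using main fu unfolding v_def \<beta>_def d_def by blast
qed



lemma lim_G2:
  fixes a :: "nat \<Rightarrow> ereal" and c :: "nat \<Rightarrow> real"
  assumes "\<And>y. y < \<phi> \<Longrightarrow> eventually (\<lambda>k. y < a k) sequentially"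
    and "eventually (\<lambda>k. a k \<le> ereal (c k)) sequentially" and "c \<longlonglongrightarrow> C"
  shows "\<phi> \<le> ereal C"
proof (rule ccontr)
  assume "\<not> \<phi> \<le> ereal C"
  hence "ereal C < \<phi>" by simp
  then obtain y where y: "C < y" "ereal y < \<phi>" using ereal_dense2 by force
  have e1: "eventually (\<lambda>k. ereal y < a k) sequentially" using assms(1)[OF y(2)] .
  have e2: "eventually (\<lambda>k. c k < y) sequentially" using order_tendstoD(2)[OF assms(3) y(1)] .
  have "eventually (\<lambda>k. False) sequentially"
    using eventually_conj[OF e1 eventually_conj[OF e2 assms(2)]]
    by (rule eventually_mono) (meson ereal_less_eq(3) less_le_not_le order.trans)
  thus False by simp
qed

lemma cone_scale:
  assumes "v \<in> contingent_cone \<Omega> u" "c > 0"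
  shows "c *\<^sub>R v \<in> contingent_cone \<Omega> u"
proof -
  obtain t vs where t: "\<forall>k. t k > 0" "t \<longlonglongrightarrow> 0" "vs \<longlonglongrightarrow> v" "\<forall>k. u + t k *\<^sub>R vs k \<in> \<Omega>"
    using assms(1) unfolding contingent_cone_def by blast
  have "\<forall>k. t k / c > 0" using t(1) assms(2) by simp
  moreover have "(\<lambda>k. t k / c) \<longlonglongrightarrow> 0" using tendsto_divide[OF t(2) tendsto_const, of c] assms(2) by simp
  moreover have "(\<lambda>k. c *\<^sub>R vs k) \<longlonglongrightarrow> c *\<^sub>R v" by (intro tendsto_intros t(3))
  moreover have "\<forall>k. u + (t k / c) *\<^sub>R (c *\<^sub>R vs k) \<in> \<Omega>" using t(4) assms(2) by simp
  ultimately show ?thesis unfolding contingent_cone_def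
    by (intro CollectI exI[of _ "\<lambda>k. t k / c"] exI[of _ "\<lambda>k. c *\<^sub>R vs k"]) blast
qed

lemma cone_scale_pair:
  assumes "(w, z) \<in> contingent_cone \<Omega> u" "c > 0"
  shows "(c *\<^sub>R w, c *\<^sub>R z) \<in> contingent_cone \<Omega> u"
  using cone_scale[OF assms] by simp

theorem corollary3p9:
  fixes f :: "'a::euclidean_space \<Rightarrow> ereal" and xb :: 'a
  assumes "proper_fun f" and "lsc_fun f" and "xb \<in> edom f"
    and "0 \<in> limiting_subdiff f xb"
    and "subdiff_continuous_at f xb 0" and "prox_regular_at f xb 0"
    and "twice_epi_diff_at f xb 0"
  shows "strong_local_min f xb \<longleftrightarrow>
    (\<exists>\<kappa>>0. \<forall>w \<in> sdom (graphical_deriv (prox_subdiff f) xb 0). norm w = 1 \<longrightarrow>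
       (\<exists>z \<in> graphical_deriv (prox_subdiff f) xb 0 w. inner z w \<ge> \<kappa>))"
proof -
  have prp: "\<And>y. f y \<noteq> -\<infinity>" using assms(1) unfolding proper_fun_def by blast
  obtain F0 where F0: "f xb = ereal F0"
    using assms(3) prp[of xb] unfolding edom_def by (cases "f xb") auto
  obtain r \<epsilon> where r: "r > 0" and eps: "\<epsilon> > 0" and PR: "\<forall>x u v. x \<in> cball xb \<epsilon> \<longrightarrow> u \<in> cball xb \<epsilon> \<longrightarrow> \<bar>f u - f xb\<bar> < ereal \<epsilon> \<longrightarrow>
     v \<in> limiting_subdiff f u \<longrightarrow> v \<in> cball 0 \<epsilon> \<longrightarrow>
     f x \<ge> f u + ereal (inner v (x - u)) - ereal (r / 2 * (norm (x - u))\<^sup>2)"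
    using assms(6) unfolding prox_regular_at_def by blast
  have PR0: "f x \<ge> ereal (F0 - r / 2 * (norm (x - xb))\<^sup>2)" if "x \<in> cball xb \<epsilon>" for x
    using PRr[OF PR F0 F0, of 0 x] assms(4) eps that by simp
  have KEY: "second_subderiv f xb 0 w = ereal (inner z w)"
    if "(w, z) \<in> contingent_cone (graph_of (prox_subdiff f)) (xb, 0)" for w z
    by (rule key[OF F0 r eps PR assms(4) assms(5) assms(7) that])
  have GD: "z \<in> graphical_deriv (prox_subdiff f) xb 0 w \<longleftrightarrow>
      (w, z) \<in> contingent_cone (graph_of (prox_subdiff f)) (xb, 0)" for w z
    unfolding graphical_deriv_def by simp
  have TE: "\<exists>ws. ws \<longlonglongrightarrow> w \<and> (\<lambda>k. second_dq f xb 0 (\<tau> k) (ws k)) \<longlonglongrightarrow> second_subderiv f xb 0 w"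
    if "\<And>k. \<tau> k > 0" "\<tau> \<longlonglongrightarrow> 0" for \<tau> w
    using assms(7) that unfolding twice_epi_diff_at_def by blast
  show ?thesis
  proof
    assume "strong_local_min f xb"
    then obtain \<kappa> \<delta> where \<kappa>: "\<kappa> > 0" "\<delta> > 0"
      and SM: "\<And>x. x \<in> ball xb \<delta> \<Longrightarrow> f x - f xb \<ge> ereal (\<kappa> / 2 * (norm (x - xb))\<^sup>2)"
      unfolding strong_local_min_def by blast
    have "\<forall>w \<in> sdom (graphical_deriv (prox_subdiff f) xb 0). norm w = 1 \<longrightarrow>
       (\<exists>z \<in> graphical_deriv (prox_subdiff f) xb 0 w. inner z w \<ge> \<kappa>)"
    proof (intro ballI impI)
      fix w assume w: "w \<in> sdom (graphical_deriv (prox_subdiff f) xb 0)" "norm w = 1"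
      then obtain z where z: "z \<in> graphical_deriv (prox_subdiff f) xb 0 w" unfolding sdom_def by blast
      have \<phi>: "second_subderiv f xb 0 w = ereal (inner z w)" using KEY z GD by blast
      define \<tau> where "\<tau> k = inverse (real (Suc k))" for k
      have \<tau>: "\<And>k. \<tau> k > 0" "\<tau> \<longlonglongrightarrow> 0" unfolding \<tau>_def using LIMSEQ_inverse_real_of_nat by auto
      obtain ws where ws: "ws \<longlonglongrightarrow> w" "(\<lambda>k. second_dq f xb 0 (\<tau> k) (ws k)) \<longlonglongrightarrow> ereal (inner z w)"
        using TE[OF \<tau>, of w] \<phi> by auto
      have tc0: "(\<lambda>k. \<tau> k *\<^sub>R ws k) \<longlonglongrightarrow> 0" using tendsto_scaleR[OF \<tau>(2) ws(1)] by simp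
      have ev0: "eventually (\<lambda>k. xb + \<tau> k *\<^sub>R ws k \<in> ball xb \<delta>) sequentially"
        using tendstoD[OF tc0 \<kappa>(2)] by (rule eventually_mono) (auto simp: dist_norm)
      have "eventually (\<lambda>k. ereal (\<kappa> * (norm (ws k))\<^sup>2) \<le> second_dq f xb 0 (\<tau> k) (ws k)) sequentially"
        using ev0
      proof (rule eventually_mono)
        fix k assume "xb + \<tau> k *\<^sub>R ws k \<in> ball xb \<delta>"
        from SM[OF this] F0 have H: "f (xb + \<tau> k *\<^sub>R ws k) - ereal F0 \<ge> ereal (\<kappa> / 2 * (\<tau> k)\<^sup>2 * (norm (ws k))\<^sup>2)"
          using \<tau>(1)[of k] by (simp add: power_mult_distrib abs_of_pos mult_ac)
        have "ereal (F0 + \<kappa> * (norm (ws k))\<^sup>2 * (\<tau> k)\<^sup>2 / 2) \<le> f (xb + \<tau> k *\<^sub>R ws k)"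
          using H by (cases "f (xb + \<tau> k *\<^sub>R ws k)") (auto simp: algebra_simps)
        then show "ereal (\<kappa> * (norm (ws k))\<^sup>2) \<le> second_dq f xb 0 (\<tau> k) (ws k)"
          by (rule dq_lower[where f=f and xb=xb, OF F0 \<tau>(1)[of k]])
      qed
      hence "ereal (\<kappa> * (norm w)\<^sup>2) \<le> ereal (inner z w)"
        by (intro tendsto_le[OF trivial_limit_sequentially ws(2)]) (auto intro!: tendsto_intros ws(1))
      hence "\<kappa> \<le> inner z w" using w(2) by simp
      thus "\<exists>z \<in> graphical_deriv (prox_subdiff f) xb 0 w. inner z w \<ge> \<kappa>" using z by blast
    qed
    thus "\<exists>\<kappa>>0. \<forall>w \<in> sdom (graphical_deriv (prox_subdiff f) xb 0). norm w = 1 \<longrightarrow>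
       (\<exists>z \<in> graphical_deriv (prox_subdiff f) xb 0 w. inner z w \<ge> \<kappa>)" using \<kappa>(1) by blast
  next
    assume "\<exists>\<kappa>>0. \<forall>w \<in> sdom (graphical_deriv (prox_subdiff f) xb 0). norm w = 1 \<longrightarrow>
       (\<exists>z \<in> graphical_deriv (prox_subdiff f) xb 0 w. inner z w \<ge> \<kappa>)"
    then obtain \<kappa> where \<kappa>: "\<kappa> > 0" and COND: "\<And>w. w \<in> sdom (graphical_deriv (prox_subdiff f) xb 0) \<Longrightarrow> norm w = 1 \<Longrightarrow>
       (\<exists>z \<in> graphical_deriv (prox_subdiff f) xb 0 w. inner z w \<ge> \<kappa>)" by blast
    show "strong_local_min f xb"
    proof (rule ccontr)
      assume NSM: "\<not> strong_local_min f xb"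
      define e where "e k = inverse (real (Suc k))" for k
      have e: "\<And>k. e k > 0" "\<And>k. e k \<le> 1" "e \<longlonglongrightarrow> 0" unfolding e_def
        using LIMSEQ_inverse_real_of_nat by (auto simp: field_simps)
      have "\<forall>k. \<exists>x. x \<in> ball xb (min (\<epsilon> / 3) (e k)) \<and> \<not> f x - f xb \<ge> ereal (e k / 2 * (norm (x - xb))\<^sup>2)"
      proof
        fix k
        have "min (\<epsilon> / 3) (e k) > 0" using eps e(1)[of k] by simp
        thus "\<exists>x. x \<in> ball xb (min (\<epsilon> / 3) (e k)) \<and> \<not> f x - f xb \<ge> ereal (e k / 2 * (norm (x - xb))\<^sup>2)"
          using NSM e(1)[of k] unfolding strong_local_min_def by blast
      qed
      then obtain xs where xs: "\<And>k. xs k \<in> ball xb (min (\<epsilon> / 3) (e k))"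
        "\<And>k. \<not> f (xs k) - f xb \<ge> ereal (e k / 2 * (norm (xs k - xb))\<^sup>2)" by metis
      define t where "t k = norm (xs k - xb)" for k
      have tpos: "t k > 0" for k
      proof -
        have "xs k \<noteq> xb" using xs(2)[of k] F0 by auto
        thus ?thesis unfolding t_def by simp
      qed
      have t3: "3 * t k \<le> \<epsilon>" and te: "t k \<le> e k" for k
        using xs(1)[of k] unfolding t_def by (auto simp: dist_norm norm_minus_commute)
      have fxs: "f (xs k) \<le> ereal (F0 + e k * (t k)\<^sup>2 / 2)" for k
        using xs(2)[of k] F0 unfolding t_def by (cases "f (xs k)") (auto simp: algebra_simps)
      have "\<forall>k. \<exists>u. (2 * r + 4) * (norm (u - xs k))\<^sup>2 \<le> (1 + 2 * r) * (t k)\<^sup>2 \<and> f u \<le> ereal (F0 + e k * (t k)\<^sup>2 / 2)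
         \<and> - (4 * r + 4) *\<^sub>R (u - xs k) \<in> prox_subdiff f u"
        using construct[OF F0 r assms(2) prp PR0 t_def tpos t3 e(2) fxs] by blast
      then obtain us where us: "\<And>k. (2 * r + 4) * (norm (us k - xs k))\<^sup>2 \<le> (1 + 2 * r) * (t k)\<^sup>2"
        "\<And>k. f (us k) \<le> ereal (F0 + e k * (t k)\<^sup>2 / 2)"
        "\<And>k. - (4 * r + 4) *\<^sub>R (us k - xs k) \<in> prox_subdiff f (us k)" by metis
      define q where "q = (1 + 2 * r) / (2 * r + 4)"
      have q: "q < 1" "0 \<le> q" unfolding q_def using r by auto
      define wv where "wv k = inverse (t k) *\<^sub>R (us k - xb)" for k
      define ww where "ww k = inverse (t k) *\<^sub>R (xs k - xb)" for k
      define zz where "zz k = - (4 * r + 4) *\<^sub>R (wv k - ww k)" for k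
      have ww1: "norm (ww k) = 1" for k unfolding ww_def t_def using tpos[of k]
        by (simp add: t_def)
      have diff: "wv k - ww k = inverse (t k) *\<^sub>R (us k - xs k)" for k
        unfolding wv_def ww_def by (simp add: algebra_simps)
      have dq: "(norm (wv k - ww k))\<^sup>2 \<le> q" for k
      proof -
        have "(norm (wv k - ww k))\<^sup>2 = (inverse (t k))\<^sup>2 * (norm (us k - xs k))\<^sup>2"
          unfolding diff norm_scaleR using tpos[of k] by (simp only: power_mult_distrib abs_inverse abs_of_pos)
        also have "\<dots> = (norm (us k - xs k))\<^sup>2 / (t k)\<^sup>2"
          by (simp add: power_inverse divide_inverse)
        also have "\<dots> \<le> q" using us(1)[of k] tpos[of k] r unfolding q_def
          by (simp add: field_simps)
        finally show ?thesis .
      qed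
      have dn: "norm (wv k - ww k) \<le> 1" for k
      proof -
        have "(norm (wv k - ww k))\<^sup>2 \<le> 1\<^sup>2" using dq[of k] q by simp
        thus ?thesis by (rule power2_le_imp_le) simp
      qed
      have bnd: "norm (wv k) \<le> 2" for k
        using norm_triangle_ineq[of "wv k - ww k" "ww k"] dn[of k] ww1[of k] by simp
      have "bounded (range (\<lambda>k. (wv k, ww k)))"
      proof (rule bounded_subset[OF bounded_Times])
        show "bounded (range wv)" unfolding bounded_iff using bnd by blast
        show "bounded (range ww)" unfolding bounded_iff using ww1 by (metis order.refl rangeE)
        show "range (\<lambda>k. (wv k, ww k)) \<subseteq> range wv \<times> range ww" by auto
      qed
      then obtain l s where s: "strict_mono (s :: nat \<Rightarrow> nat)" "((\<lambda>k. (wv k, ww k)) \<circ> s) \<longlonglongrightarrow> l"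
        using bounded_imp_convergent_subsequence by blast
      define w2 where "w2 = fst l"
      define w0 where "w0 = snd l"
      have w2c: "(\<lambda>k. wv (s k)) \<longlonglongrightarrow> w2" unfolding w2_def using tendsto_fst[OF s(2)] by (simp add: o_def)
      have w0c: "(\<lambda>k. ww (s k)) \<longlonglongrightarrow> w0" unfolding w0_def using tendsto_snd[OF s(2)] by (simp add: o_def)
      define z2 where "z2 = - (4 * r + 4) *\<^sub>R (w2 - w0)"
      have z2c: "(\<lambda>k. zz (s k)) \<longlonglongrightarrow> z2" unfolding zz_def z2_def by (intro tendsto_intros w2c w0c)
      have tc: "t \<longlonglongrightarrow> 0"
        by (rule tendsto_sandwich[of "\<lambda>k. 0" _ _ e]) (use tpos te e(3) in \<open>auto intro!: always_eventually less_imp_le\<close>)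
      have tsc: "(\<lambda>k. t (s k)) \<longlonglongrightarrow> 0" using LIMSEQ_subseq_LIMSEQ[OF tc s(1)] by (simp add: o_def)
      have esc: "(\<lambda>k. e (s k)) \<longlonglongrightarrow> 0" using LIMSEQ_subseq_LIMSEQ[OF e(3) s(1)] by (simp add: o_def)
      have "norm w0 = 1"
      proof -
        have "(\<lambda>k. norm (ww (s k))) \<longlonglongrightarrow> norm w0" by (intro tendsto_intros w0c)
        thus ?thesis using ww1 by (simp add: LIMSEQ_const_iff)
      qed
      have "(norm (w2 - w0))\<^sup>2 \<le> q"
      proof (rule LIMSEQ_le_const2)
        show "(\<lambda>k. (norm (wv (s k) - ww (s k)))\<^sup>2) \<longlonglongrightarrow> (norm (w2 - w0))\<^sup>2" by (intro tendsto_intros w2c w0c)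
        show "\<exists>N. \<forall>n\<ge>N. (norm (wv (s n) - ww (s n)))\<^sup>2 \<le> q" using dq by blast
      qed
      hence w2nz: "w2 \<noteq> 0" using \<open>norm w0 = 1\<close> q by auto
      have cone: "(w2, z2) \<in> contingent_cone (graph_of (prox_subdiff f)) (xb, 0)"
        unfolding contingent_cone_def
      proof (intro CollectI exI[of _ "\<lambda>k. t (s k)"] exI[of _ "\<lambda>k. (wv (s k), zz (s k))"] conjI allI)
        show "\<And>k. 0 < t (s k)" using tpos by simp
        show "(\<lambda>k. t (s k)) \<longlonglongrightarrow> 0" by (rule tsc)
        show "(\<lambda>k. (wv (s k), zz (s k))) \<longlonglongrightarrow> (w2, z2)" by (intro tendsto_Pair w2c z2c)
      next
        fix k
        have a: "xb + t (s k) *\<^sub>R wv (s k) = us (s k)" unfolding wv_def using tpos[of "s k"] by simp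
        have b: "t (s k) *\<^sub>R zz (s k) = - (4 * r + 4) *\<^sub>R (us (s k) - xs (s k))"
          unfolding zz_def diff using tpos[of "s k"] by simp
        show "(xb, 0) + t (s k) *\<^sub>R (wv (s k), zz (s k)) \<in> graph_of (prox_subdiff f)"
          using us(3)[of "s k"] a b unfolding graph_of_def by simp
      qed
      have \<phi>2: "second_subderiv f xb 0 w2 = ereal (inner z2 w2)" by (rule KEY[OF cone])
      have "second_subderiv f xb 0 w2 \<le> ereal 0"
      proof (rule lim_G2[OF _ _ esc])
        fix y assume "y < second_subderiv f xb 0 w2"
        thus "eventually (\<lambda>k. y < second_dq f xb 0 (t (s k)) (wv (s k))) sequentially"
          by (intro liminf_seq[OF _ tsc w2c]) (use tpos in auto)
      next
        show "eventually (\<lambda>k. second_dq f xb 0 (t (s k)) (wv (s k)) \<le> ereal (e (s k))) sequentially"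
        proof (intro always_eventually allI)
          fix k
          have a: "xb + t (s k) *\<^sub>R wv (s k) = us (s k)" unfolding wv_def using tpos[of "s k"] by simp
          show "second_dq f xb 0 (t (s k)) (wv (s k)) \<le> ereal (e (s k))"
            by (rule dq_upper[where f=f and xb=xb, OF F0 tpos]) (use us(2) prp a in auto)
        qed
      qed
      hence neg: "inner z2 w2 \<le> 0" using \<phi>2 by simp
      define n2 where "n2 = norm w2"
      have n2: "n2 > 0" using w2nz unfolding n2_def by simp
      have "(inverse n2 *\<^sub>R w2, inverse n2 *\<^sub>R z2) \<in> contingent_cone (graph_of (prox_subdiff f)) (xb, 0)"
        using cone_scale_pair[OF cone] n2 by simp
      hence "inverse n2 *\<^sub>R z2 \<in> graphical_deriv (prox_subdiff f) xb 0 (inverse n2 *\<^sub>R w2)"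
        using GD by blast
      hence "inverse n2 *\<^sub>R w2 \<in> sdom (graphical_deriv (prox_subdiff f) xb 0)"
        unfolding sdom_def by (simp add: ex_in_conv[symmetric]; blast)
      moreover have "norm (inverse n2 *\<^sub>R w2) = 1" using n2 unfolding n2_def by simp
      ultimately obtain z' where z': "z' \<in> graphical_deriv (prox_subdiff f) xb 0 (inverse n2 *\<^sub>R w2)"
        "inner z' (inverse n2 *\<^sub>R w2) \<ge> \<kappa>" using COND by blast
      have "(n2 *\<^sub>R inverse n2 *\<^sub>R w2, n2 *\<^sub>R z') \<in> contingent_cone (graph_of (prox_subdiff f)) (xb, 0)"
        using cone_scale_pair[OF z'(1)[unfolded GD] n2] .
      hence "(w2, n2 *\<^sub>R z') \<in> contingent_cone (graph_of (prox_subdiff f)) (xb, 0)" using n2 by simp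
      from KEY[OF this] \<phi>2 have eq: "inner z2 w2 = inner (n2 *\<^sub>R z') w2" by simp
      have "inner (n2 *\<^sub>R z') w2 = n2 * n2 * inner z' (inverse n2 *\<^sub>R w2)"
        using n2 by (simp add: field_simps)
      moreover have "n2 * n2 * inner z' (inverse n2 *\<^sub>R w2) \<ge> n2 * n2 * \<kappa>"
        using z'(2) n2 by (intro mult_left_mono) auto
      moreover have "n2 * n2 * \<kappa> > 0" using n2 \<kappa> by simp
      ultimately show False using eq neg by linarith
    qed
  qed
qed

end
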